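(* Let $\mathcal A=(\Sigma,Q_\mathcal A,I_\mathcal A,F_\mathcal A,\delta_\mathcal A)$ and $\mathcal B=(\Sigma,Q_\mathcal B,I_\mathcal B,F_\mathcal B,\delta_\mathcal B)$ be NBA and $P=P_{\mathcal A,\mathcal B}(\subseteq^{\mathrm{bw}},\subseteq^{\mathrm f})$. Then $\mathcal L(\mathcal A)\subseteq\mathcal L(\mathcal B)$ if and only if $\mathcal L(\mathrm{Prune}_\mathcal B(\mathcal A,P))\subseteq\mathcal L(\mathcal B)$.
   Context: NBA are forward and backward complete; initial traces start in initial states, fair traces are infinite and visit accepting states infinitely often; the language is the set of infinite words with an initial fair trace. The relations below are on states of the disjoint union of $\mathcal A$ and $\mathcal B$, restricted to $Q_\mathcal A\times Q_\mathcal B$. Backward finite trace inclusion: $p\subseteq^{\mathrm{bw}}q$ iff for every finite word $w$, if there is a finite $w$-trace from an initial state ending in $p$, then there is one from an initial state ending in $q$. Fair trace inclusion: $p\subseteq^{\mathrm f}q$ iff for every infinite word $w$ and infinite $w$-trace from $p$ there is an infinite $w$-trace from $q$ that is fair whenever the former is fair. For $R_b,R_f\subseteq Q_\mathcal A\times Q_\mathcal B$, $P_{\mathcal A,\mathcal B}(R_b,R_f)=\{((p,\sigma,r),(p',\sigma,r'))\in\delta_\mathcal A\times\delta_\mathcal B: p\,R_b\,p',\ r\,R_f\,r'\}$. For $P\subseteq\delta_\mathcal A\times\delta_\mathcal B$, $\mathrm{Prune}_\mathcal B(\mathcal A,P)=(\Sigma,Q_\mathcal A,I_\mathcal A,F_\mathcal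 A,\delta')$ with $\delta'=\{t\in\delta_\mathcal A:\nexists t'\in\delta_\mathcal B,\ (t,t')\in P\}$. *)

theory Defs
  imports Main
begin

record ('s, 'a) nba =
  alphabet :: "'a set"
  states :: "'s set"
  initial :: "'s set"
  accepting :: "'s set"
  trans :: "('s \<times> 'a \<times> 's) set"

definition wf_nba :: "('s, 'a) nba \<Rightarrow> bool" where
  "wf_nba A \<longleftrightarrow> initial A \<subseteq> states A \<and> accepting A \<subseteq> states A \<and>
     trans A \<subseteq> states A \<times> alphabet A \<times> states A"

definition forward_complete :: "('s, 'a) nba \<Rightarrow> bool" where
  "forward_complete A \<longleftrightarrow>
     (\<forall>q\<in>states A. \<forall>a\<in>alphabet A. \<exists>q'. (q, a, q') \<in> trans A)"

definition backward_complete :: "('s, 'a) nba \<Rightarrow> bool" where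
  "backward_complete A \<longleftrightarrow>
     (\<forall>q'\<in>states A. \<forall>a\<in>alphabet A. \<exists>q. (q, a, q') \<in> trans A)"

definition inf_trace :: "('s, 'a) nba \<Rightarrow> (nat \<Rightarrow> 'a) \<Rightarrow> (nat \<Rightarrow> 's) \<Rightarrow> bool" where
  "inf_trace A w r \<longleftrightarrow> (\<forall>i. (r i, w i, r (Suc i)) \<in> trans A)"

definition fair :: "('s, 'a) nba \<Rightarrow> (nat \<Rightarrow> 's) \<Rightarrow> bool" where
  "fair A r \<longleftrightarrow> (\<exists>\<^sub>\<infinity>i. r i \<in> accepting A)"

definition fin_trace :: "('s, 'a) nba \<Rightarrow> 'a list \<Rightarrow> (nat \<Rightarrow> 's) \<Rightarrow> bool" where
  "fin_trace A w r \<longleftrightarrow> (\<forall>i < length w. (r i, w ! i, r (Suc i)) \<in> trans A)"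

definition language :: "('s, 'a) nba \<Rightarrow> (nat \<Rightarrow> 'a) set" where
  "language A = {w. \<exists>r. inf_trace A w r \<and> r 0 \<in> initial A \<and> fair A r}"

definition bw_incl :: "('s, 'a) nba \<Rightarrow> ('t, 'a) nba \<Rightarrow> ('s \<times> 't) set" where
  "bw_incl A B = {(p, q). p \<in> states A \<and> q \<in> states B \<and>
     (\<forall>w. (\<exists>r. fin_trace A w r \<and> r 0 \<in> initial A \<and> r (length w) = p) \<longrightarrow>
          (\<exists>r'. fin_trace B w r' \<and> r' 0 \<in> initial B \<and> r' (length w) = q))}"

definition fair_incl :: "('s, 'a) nba \<Rightarrow> ('t, 'a) nba \<Rightarrow> ('s \<times> 't) set" where
  "fair_incl A B = {(p, q). p \<in> states A \<and> q \<in> states B \<and>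
     (\<forall>w r. inf_trace A w r \<and> r 0 = p \<longrightarrow>
        (\<exists>r'. inf_trace B w r' \<and> r' 0 = q \<and> (fair A r \<longrightarrow> fair B r')))}"

definition P_rel :: "('s, 'a) nba \<Rightarrow> ('t, 'a) nba \<Rightarrow> ('s \<times> 't) set \<Rightarrow> ('s \<times> 't) set
    \<Rightarrow> (('s \<times> 'a \<times> 's) \<times> ('t \<times> 'a \<times> 't)) set" where
  "P_rel A B Rb Rf = {((p, a, r), (p', a', r')).
      (p, a, r) \<in> trans A \<and> (p', a', r') \<in> trans B \<and> a = a' \<and> (p, p') \<in> Rb \<and> (r, r') \<in> Rf}"

definition prune :: "('t, 'a) nba \<Rightarrow> ('s, 'a) nba \<Rightarrow> (('s \<times> 'a \<times> 's) \<times> ('t \<times> 'a \<times> 't)) set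
    \<Rightarrow> ('s, 'a) nba" where
  "prune B A P = A\<lparr>trans := {t \<in> trans A. \<not> (\<exists>t' \<in> trans B. (t, t') \<in> P)}\<rparr>"

end

theory Submission
  imports Defs "HOL-Library.Infinite_Set"
begin

lemma prune_sub: "language (prune B A P) \<subseteq> language A"
  unfolding language_def inf_trace_def prune_def fair_def by auto

theorem theorem8p3:
  fixes A :: "('s, 'a) nba" and B :: "('t, 'a) nba"
  assumes "wf_nba A" and "wf_nba B"
    and "alphabet A = alphabet B"
    and "forward_complete A" and "backward_complete A"
    and "forward_complete B" and "backward_complete B"
  shows "language A \<subseteq> language B \<longleftrightarrow>
    language (prune B A (P_rel A B (bw_incl A B) (fair_incl A B))) \<subseteq> language B"
proof
  assume "language A \<subseteq> language B" then show "language (prune B A (P_rel A B (bw_incl A B) (fair_incl A B))) \<subseteq> language B"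
    using prune_sub by blast
next
  let ?P = "P_rel A B (bw_incl A B) (fair_incl A B)"
  assume H: "language (prune B A ?P) \<subseteq> language B"
  show "language A \<subseteq> language B"
  proof
    fix w assume "w \<in> language A"
    then obtain r where tr: "inf_trace A w r" and r0: "r 0 \<in> initial A" and fr: "fair A r"
      unfolding language_def by blast
    show "w \<in> language B"
    proof (cases "\<exists>i. \<exists>t'\<in>trans B. ((r i, w i, r (Suc i)), t') \<in> ?P")
      case False
      then have "inf_trace (prune B A ?P) w r" using tr
        unfolding inf_trace_def prune_def by auto
      moreover have "r 0 \<in> initial (prune B A ?P)" "fair (prune B A ?P) r"
        using r0 fr unfolding prune_def fair_def by auto
      ultimately have "w \<in> language (prune B A ?P)" unfolding language_def by blast
      then show ?thesis using H by blast
    next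
      case True
      then obtain i p' q' where tB: "(p', w i, q') \<in> trans B"
        and bw: "(r i, p') \<in> bw_incl A B" and fi: "(r (Suc i), q') \<in> fair_incl A B"
        unfolding P_rel_def by blast
      define u where "u = map w [0..<i]"
      have "fin_trace A u r" using tr unfolding fin_trace_def inf_trace_def u_def
        by (auto simp: nth_map_upt)
      moreover have "length u = i" by (simp add: u_def)
      ultimately have "\<exists>r'. fin_trace B u r' \<and> r' 0 \<in> initial B \<and> r' (length u) = p'"
        using bw r0 unfolding bw_incl_def by blast
      then obtain r1 where r1: "fin_trace B u r1" "r1 0 \<in> initial B" "r1 i = p'"
        using \<open>length u = i\<close> by auto
      define v where "v = (\<lambda>j. w (j + Suc i))"
      define rs where "rs = (\<lambda>j. r (j + Suc i))"
      have trs: "inf_trace A v rs" using tr unfolding inf_trace_def v_def rs_def by simp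
      have frs: "fair A rs" unfolding fair_def INFM_nat_le
      proof
        fix m
        obtain n where "n \<ge> m + Suc i" "r n \<in> accepting A" using fr unfolding fair_def INFM_nat_le by blast
        then show "\<exists>n'\<ge>m. rs n' \<in> accepting A"
          by (intro exI[of _ "n - Suc i"]) (auto simp: rs_def)
      qed
      obtain r2 where r2: "inf_trace B v r2" "r2 0 = q'" "fair B r2"
      proof -
        have "\<forall>x y. inf_trace A x y \<and> y 0 = r (Suc i) \<longrightarrow>
          (\<exists>r'. inf_trace B x r' \<and> r' 0 = q' \<and> (fair A y \<longrightarrow> fair B r'))"
          using fi unfolding fair_incl_def by simp
        moreover have "rs 0 = r (Suc i)" by (simp add: rs_def)
        ultimately show ?thesis using trs frs that by blast
      qed
      define s where "s = (\<lambda>j. if j \<le> i then r1 j else r2 (j - Suc i))"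
      have "inf_trace B w s" unfolding inf_trace_def
      proof
        fix j
        show "(s j, w j, s (Suc j)) \<in> trans B"
        proof (cases "j < i")
          case True
          then show ?thesis using r1(1) \<open>length u = i\<close>
            unfolding fin_trace_def s_def u_def by (auto simp: nth_map_upt)
        next
          case False
          show ?thesis
          proof (cases "j = i")
            case True then show ?thesis using tB r1(3) r2(2) unfolding s_def by simp
          next
            case False
            with \<open>\<not> j < i\<close> have "j > i" by simp
            then have "(r2 (j - Suc i), v (j - Suc i), r2 (Suc (j - Suc i))) \<in> trans B"
              using r2(1) unfolding inf_trace_def by blast
            moreover have "v (j - Suc i) = w j" "Suc (j - Suc i) = Suc j - Suc i"
              using \<open>j > i\<close> unfolding v_def by auto
            ultimately show ?thesis using \<open>j > i\<close> unfolding s_def by auto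
          qed
        qed
      qed
      moreover have "s 0 \<in> initial B" using r1 unfolding s_def by simp
      moreover have "fair B s"
        unfolding fair_def INFM_nat_le
      proof
        fix m
        obtain n where "n \<ge> m" "r2 n \<in> accepting B" using r2(3) unfolding fair_def INFM_nat_le by blast
        then show "\<exists>n'\<ge>m. s n' \<in> accepting B"
          by (intro exI[of _ "n + Suc i"]) (auto simp: s_def)
      qed
      ultimately show ?thesis unfolding language_def by blast
    qed
  qed
qed

end
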